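(* Let $\Gamma$ be a compact abelian group such that for every $a\in\mathbb{N}^{\times}$ the subgroup $\omega_a(\Gamma)$ has finite index in $\Gamma$ and $\ker\omega_a$ is finite, where $\omega_a:\Gamma\to\Gamma$ is $\omega_a(g)=g^a$. Then each $\omega_a$ is a proper local homeomorphism.
   Context: $\mathbb{N}^{\times}$ denotes the set of positive integers; $\Gamma$ is written multiplicatively and is Hausdorff. *)

theory Defs
  imports "HOL-Analysis.Analysis" "HOL-Algebra.Algebra"
begin

definition topological_group :: "('a, 'b) monoid_scheme \<Rightarrow> 'a topology \<Rightarrow> bool" where
  "topological_group G T \<longleftrightarrow>
     group G \<and> topspace T = carrier G \<and>
     continuous_map (prod_topology T T) T (\<lambda>p. mult G (fst p) (snd p)) \<and>
     continuous_map T T (\<lambda>x. m_inv G x)"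

definition omega :: "('a, 'b) monoid_scheme \<Rightarrow> nat \<Rightarrow> 'a \<Rightarrow> 'a" where
  "omega G a = (\<lambda>g. pow G g a)"

definition local_homeomorphism_map :: "'a topology \<Rightarrow> 'b topology \<Rightarrow> ('a \<Rightarrow> 'b) \<Rightarrow> bool" where
  "local_homeomorphism_map T S f \<longleftrightarrow>
     continuous_map T S f \<and>
     (\<forall>x \<in> topspace T. \<exists>U. openin T U \<and> x \<in> U \<and> openin S (f ` U) \<and>
        homeomorphic_map (subtopology T U) (subtopology S (f ` U)) f)"

end

theory Submission
  imports Defs
begin

lemma lemma3p3_aux:
  fixes G :: "('a, 'b) monoid_scheme" (structure) and T :: "'a topology"
  assumes "topological_group G T"
    and "comm_group G"
    and "compact_space T"
    and "Hausdorff_space T"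
    and "\<And>a::nat. a \<ge> 1 \<Longrightarrow> finite (rcosets\<^bsub>G\<^esub> (omega G a ` carrier G))"
    and "\<And>a::nat. a \<ge> 1 \<Longrightarrow> finite (kernel G G (omega G a))"
  shows "\<And>a::nat. a \<ge> 1 \<Longrightarrow>
           proper_map T T (omega G a) \<and> local_homeomorphism_map T T (omega G a)"
proof -
  fix a :: nat
  assume a1: "a \<ge> 1"
  interpret comm_group G by (rule assms(2))
  have top: "topspace T = carrier G"
   and cmul: "continuous_map (prod_topology T T) T (\<lambda>p. fst p \<otimes> snd p)"
   and cinv: "continuous_map T T (\<lambda>x. inv x)"
    using assms(1) unfolding topological_group_def by auto
  define f where "f = omega G a"
  have fx: "f x = x [^] a" for x unfolding f_def omega_def by simp
  have cpow: "continuous_map T T (\<lambda>x. x [^] (n::nat))" for n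
  proof (induction n)
    case 0
    then show ?case by (simp add: top)
  next
    case (Suc n)
    have "continuous_map T T ((\<lambda>p. fst p \<otimes> snd p) \<circ> (\<lambda>x. (x [^] n, x)))"
      by (intro continuous_map_compose[OF _ cmul] continuous_map_pairedI Suc continuous_map_id[unfolded id_def])
    then show ?case by (rule continuous_map_eq) (simp add: top)
  qed
  have cf: "continuous_map T T f" using cpow[of a] by (simp add: fx[abs_def])
  have t1: "t1_space T" using assms(4) by (rule Hausdorff_imp_t1_space)
  have cm: "closed_map T T f" using continuous_imp_closed_map cf assms(3,4) by blast
  have proper: "proper_map T T f"
    using continuous_closed_imp_proper_map[OF assms(3) t1 cf cm] .
  have crm: "continuous_map T T (\<lambda>y. y \<otimes> c)" if "c \<in> carrier G" for c
  proof -
    have "continuous_map T T ((\<lambda>p. fst p \<otimes> snd p) \<circ> (\<lambda>x. (x, c)))"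
      using that by (intro continuous_map_compose[OF _ cmul] continuous_map_pairedI continuous_map_id[unfolded id_def]) (auto simp: top)
    then show ?thesis by (simp add: o_def)
  qed
  have hom: "group_hom G G f"
    unfolding group_hom_def group_hom_axioms_def
    by (auto intro!: homI simp: fx nat_pow_distrib is_group)
  define H where "H = f ` carrier G"
  have sub: "subgroup H G" unfolding H_def by (rule group_hom.img_is_subgroup[OF hom])
  have cH: "compactin T H" unfolding H_def
    using image_compactin[OF assms(3)[unfolded compact_space_def] cf] top by simp
  have clH: "closedin T H" using compactin_imp_closedin[OF assms(4) cH] .
  have Hsub: "H \<subseteq> carrier G" using subgroup.subset[OF sub] .
  have oH: "openin T H"
  proof -
    let ?R = "{R \<in> rcosets H. R \<noteq> H}"
    have "?R \<subseteq> rcosets H" by (rule Collect_subset)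
    then have fin: "finite ?R" using finite_subset assms(5)[OF a1] unfolding H_def f_def by metis
    have "closedin T R" if "R \<in> ?R" for R
    proof -
      have "R \<in> rcosets H" using that by simp
      then obtain x where x: "x \<in> carrier G" "R = H #> x" unfolding RCOSETS_def by auto
      have "R = (\<lambda>y. y \<otimes> x) ` H" using x unfolding r_coset_def by auto
      then show ?thesis
        using compactin_imp_closedin[OF assms(4) image_compactin[OF cH crm[OF x(1)]]] by simp
    qed
    then have cl: "closedin T (\<Union>?R)" using closedin_Union[OF fin] by blast
    have Hr: "H \<in> rcosets H"
      using rcosetsI[OF Hsub one_closed] coset_mult_one[OF Hsub] by simp
    have eq: "H = topspace T - \<Union>?R"
    proof (intro equalityI subsetI)
      fix x assume xH: "x \<in> H"
      have "x \<in> carrier G" using xH Hsub by auto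
      moreover have "x \<notin> R" if "R \<in> ?R" for R
      proof -
        have "R \<in> rcosets H" "R \<noteq> H" using that by auto
        then have "disjnt H R" using rcos_disjoint[OF sub] Hr unfolding pairwise_def by blast
        then show ?thesis using xH unfolding disjnt_def by blast
      qed
      ultimately show "x \<in> topspace T - \<Union>?R" using top by auto
    next
      fix x assume x: "x \<in> topspace T - \<Union>?R"
      then have xc: "x \<in> carrier G" using top by auto
      have r: "H #> x \<in> rcosets H" using rcosetsI[OF Hsub xc] .
      have xin: "x \<in> H #> x" using rcos_self[OF xc sub] .
      have "H #> x = H"
      proof (rule ccontr)
        assume "H #> x \<noteq> H"
        then have "H #> x \<in> ?R" using r by simp
        then show False using x xin by blast
      qed
      then show "x \<in> H" using xin by simp
    qed
    show ?thesis by (subst eq) (rule openin_diff[OF openin_topspace cl])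
  qed
  define K where "K = kernel G G f"
  have finK: "finite K" using assms(6)[OF a1] unfolding K_def f_def by simp
  have om: "open_map T T f"
    unfolding open_map_def
  proof (intro allI impI)
    fix U assume oU: "openin T U"
    have Uc: "U \<subseteq> carrier G" using openin_subset[OF oU] top by simp
    define P where "P = {x \<in> carrier G. f x \<in> f ` U}"
    have "P = (\<Union>k\<in>K. {x \<in> topspace T. x \<otimes> inv k \<in> U})"
    proof (intro equalityI subsetI)
      fix x assume "x \<in> P"
      then obtain u where u: "u \<in> U" "f x = f u" "x \<in> carrier G" unfolding P_def by auto
      have uc: "u \<in> carrier G" using u Uc by auto
      define k where "k = inv u \<otimes> x"
      have kc: "k \<in> carrier G" using uc u by (simp add: k_def)
      have "f k = inv (f u) \<otimes> f x" using uc u(3)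
        by (simp add: k_def fx nat_pow_distrib nat_pow_inv)
      then have "f k = \<one>" using u uc by (simp add: fx)
      then have "k \<in> K" using kc unfolding K_def kernel_def by simp
      moreover have "x \<otimes> inv k = u" using uc u(3)
        by (simp add: k_def inv_mult_group m_assoc) (metis m_assoc r_inv l_one inv_closed)
      ultimately show "x \<in> (\<Union>k\<in>K. {x \<in> topspace T. x \<otimes> inv k \<in> U})"
        using u top by auto
    next
      fix x assume "x \<in> (\<Union>k\<in>K. {x \<in> topspace T. x \<otimes> inv k \<in> U})"
      then obtain k where k: "k \<in> K" "x \<in> carrier G" "x \<otimes> inv k \<in> U" using top by auto
      have kc: "k \<in> carrier G" "f k = \<one>" using k(1) unfolding K_def kernel_def by auto
      have "f (x \<otimes> inv k) = f x"
        using kc k(2) by (simp add: fx nat_pow_distrib nat_pow_inv)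
      then show "x \<in> P" using k unfolding P_def by (metis (mono_tags, lifting) image_eqI mem_Collect_eq)
    qed
    moreover have "openin T {x \<in> topspace T. x \<otimes> inv k \<in> U}" if "k \<in> K" for k
      using that unfolding K_def kernel_def
      by (intro openin_continuous_map_preimage[OF crm oU]) auto
    ultimately have oP: "openin T P" by auto
    define C where "C = carrier G - P"
    have "closedin T C" unfolding C_def using oP top by (metis closedin_diff closedin_topspace)
    then have "closedin T (f ` C)"
      using cm unfolding closed_map_def by blast
    moreover have "f ` U = H - f ` C"
      unfolding H_def C_def P_def using Uc by (auto, metis image_eqI)
    ultimately show "openin T (f ` U)" using oH by (simp add: openin_diff)
  qed
  have "\<exists>U. openin T U \<and> g \<in> U \<and> openin T (f ` U) \<and>
        homeomorphic_map (subtopology T U) (subtopology T (f ` U)) f" if g: "g \<in> topspace T" for g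
  proof -
    define Ob where "Ob = topspace T - (K - {\<one>})"
    have Kc: "K \<subseteq> carrier G" unfolding K_def kernel_def by blast
    have "finite (K - {\<one>})" using finK by simp
    moreover have "K - {\<one>} \<subseteq> topspace T" using Kc top by blast
    ultimately have "closedin T (K - {\<one>})" using t1 unfolding t1_space_closedin_finite by blast
    then have oOb: "openin T Ob" unfolding Ob_def by (simp add: openin_diff)
    have cd: "continuous_map (prod_topology T T) T (\<lambda>p. fst p \<otimes> inv (snd p))"
    proof -
      have "continuous_map (prod_topology T T) T ((\<lambda>p. fst p \<otimes> snd p) \<circ> (\<lambda>p. (fst p, inv (snd p))))"
        by (intro continuous_map_compose[OF _ cmul] continuous_map_pairedI continuous_map_fst
            continuous_map_compose[OF continuous_map_snd cinv, unfolded o_def])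
      then show ?thesis by (simp add: o_def)
    qed
    define S where "S = {p \<in> topspace (prod_topology T T). fst p \<otimes> inv (snd p) \<in> Ob}"
    have oS: "openin (prod_topology T T) S" unfolding S_def by (rule openin_continuous_map_preimage[OF cd oOb])
    have "g \<otimes> inv g = \<one>" using g top by simp
    then have "(g, g) \<in> S" using g top unfolding S_def Ob_def by simp
    then obtain W1 W2 where W: "openin T W1" "openin T W2" "g \<in> W1" "g \<in> W2" "W1 \<times> W2 \<subseteq> S"
      using oS unfolding openin_prod_topology_alt by blast
    define U where "U = W1 \<inter> W2"
    have oU: "openin T U" using W unfolding U_def by auto
    have Uc: "U \<subseteq> carrier G" using openin_subset[OF oU] top by simp
    have inj: "inj_on f U"
    proof (rule inj_onI)
      fix x y assume xy: "x \<in> U" "y \<in> U" "f x = f y"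
      have xc: "x \<in> carrier G" and yc: "y \<in> carrier G" using xy Uc by auto
      have "(x, y) \<in> S" using W xy unfolding U_def by auto
      then have "x \<otimes> inv y \<in> Ob" unfolding S_def by simp
      moreover have "f (x \<otimes> inv y) = \<one>"
        using xc yc xy(3) by (simp add: fx nat_pow_distrib nat_pow_inv)
      then have "x \<otimes> inv y \<in> K" using xc yc unfolding K_def kernel_def by simp
      ultimately have "x \<otimes> inv y = \<one>" unfolding Ob_def by blast
      then show "x = y" using inv_solve_right'[of "\<one>" x y] xc yc by simp
    qed
    have fU: "f ` U \<subseteq> topspace T" using Uc top by (auto simp: fx)
    have tU: "topspace (subtopology T U) = U" using Uc top by (simp add: topspace_subtopology Int_absorb1)
    have tfU: "topspace (subtopology T (f ` U)) = f ` U" using fU by (simp add: topspace_subtopology Int_absorb1)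
    have "homeomorphic_map (subtopology T U) (subtopology T (f ` U)) f"
    proof (rule bijective_open_imp_homeomorphic_map)
      have "f \<in> topspace (subtopology T U) \<rightarrow> f ` U" unfolding tU by blast
      then show "continuous_map (subtopology T U) (subtopology T (f ` U)) f"
        by (rule continuous_map_into_subtopology[OF continuous_map_from_subtopology[OF cf]])
      have "f \<in> topspace (subtopology T U) \<rightarrow> f ` U" unfolding tU by blast
      then show "open_map (subtopology T U) (subtopology T (f ` U)) f"
        by (rule open_map_into_subtopology[OF open_map_from_subtopology[OF om oU]])
      show "f ` topspace (subtopology T U) = topspace (subtopology T (f ` U))"
        unfolding tU tfU ..
      show "inj_on f (topspace (subtopology T U))"
        unfolding tU by (rule inj)
    qed
    moreover have "openin T (f ` U)" using om oU unfolding open_map_def by blast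
    ultimately show ?thesis using oU W(3,4) unfolding U_def by (intro exI[of _ "W1 \<inter> W2"]) simp
  qed
  then have "local_homeomorphism_map T T f"
    unfolding local_homeomorphism_map_def using cf by blast
  then show "proper_map T T (omega G a) \<and> local_homeomorphism_map T T (omega G a)"
    using proper unfolding f_def by simp
qed


theorem lemma3p3:
  fixes G :: "('a, 'b) monoid_scheme" and T :: "'a topology"
  assumes "topological_group G T"
    and "comm_group G"
    and "compact_space T"
    and "Hausdorff_space T"
    and "\<And>a::nat. a \<ge> 1 \<Longrightarrow> finite (rcosets\<^bsub>G\<^esub> (omega G a ` carrier G))"
    and "\<And>a::nat. a \<ge> 1 \<Longrightarrow> finite (kernel G G (omega G a))"
  shows "\<And>a::nat. a \<ge> 1 \<Longrightarrow>
           proper_map T T (omega G a) \<and> local_homeomorphism_map T T (omega G a)"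
  by (rule lemma3p3_aux[OF assms])

end
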